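(* Let $A\in\mathbb{R}^{m\times n}$, $b\in\mathbb{R}^m$, and $c,c'\in\mathbb{R}^n$. Let $s'$ be an optimal dual solution to $\operatorname{LP}(c')$, i.e. $s'=c'-A^\top y'\ge\mathbb{0}$ for some $y'\in\mathbb{R}^m$ with $(y',s')$ optimal for the dual $\max\{\langle b,y\rangle: A^\top y+s=c',\ s\ge\mathbb{0}\}$. If $c\in\ker(A)$, $\|c\|_2=1$, and $\|c-c'\|_\infty<1/(\sqrt n(m+2)\kappa_A)$, then there exists an index $j\in[n]$ with \[s'_j>\frac{m+1}{\sqrt n(m+2)}.\]
   Context: $\operatorname{LP}(\tilde c)$ denotes $\min\{\langle\tilde c,x\rangle: Ax=b,\ x\ge\mathbb{0}\}$. An elementary vector of $\ker(A)$ is a nonzero $g\in\ker(A)$ with inclusion-minimal support among nonzero vectors of $\ker(A)$; the circuit imbalance is $\kappa_A=\max\{|g_i|/|g_j|: g \text{ elementary},\ i,j\in\mathrm{supp}(g)\}$ (so $\kappa_A\ge 1$). *)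

theory Defs
  imports "HOL-Analysis.Analysis"
begin

text \<open>Matrices A in R^{m x n} are rendered as real^'n^'m; m = CARD('m), n = CARD('n).\<close>

definition supp_vec :: "real^'n \<Rightarrow> 'n set" where
  "supp_vec g = {i. g $ i \<noteq> 0}"

definition elementary_vec :: "real^'n^'m \<Rightarrow> real^'n \<Rightarrow> bool" where
  "elementary_vec A g \<longleftrightarrow> A *v g = 0 \<and> g \<noteq> 0 \<and>
     (\<forall>h. A *v h = 0 \<and> h \<noteq> 0 \<and> supp_vec h \<subseteq> supp_vec g \<longrightarrow> supp_vec h = supp_vec g)"

definition circuit_imbalance :: "real^'n^'m \<Rightarrow> real" where
  "circuit_imbalance A = Sup {\<bar>g $ i\<bar> / \<bar>g $ j\<bar> | g i j.
      elementary_vec A g \<and> i \<in> supp_vec g \<and> j \<in> supp_vec g}"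

definition dual_feasible :: "real^'n^'m \<Rightarrow> real^'n \<Rightarrow> real^'m \<Rightarrow> real^'n \<Rightarrow> bool" where
  "dual_feasible A c y s \<longleftrightarrow> transpose A *v y + s = c \<and> (\<forall>i. s $ i \<ge> 0)"

definition dual_optimal :: "real^'n^'m \<Rightarrow> real^'m \<Rightarrow> real^'n \<Rightarrow> real^'m \<Rightarrow> real^'n \<Rightarrow> bool" where
  "dual_optimal A b c y s \<longleftrightarrow> dual_feasible A c y s \<and>
     (\<forall>y2 s2. dual_feasible A c y2 s2 \<longrightarrow> b \<bullet> y2 \<le> b \<bullet> y)"

end

theory Submission
  imports Defs
begin

lemma elem_scalar:
  fixes A :: "real^'n^'m"
  assumes g: "elementary_vec A g" and h: "elementary_vec A h"
    and sup: "supp_vec g = supp_vec h"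
  shows "\<exists>t. t \<noteq> 0 \<and> g = t *s h"
proof -
  have "h \<noteq> 0" using h unfolding elementary_vec_def by blast
  then obtain i where hi: "h $ i \<noteq> 0" by (metis vec_eq_iff zero_index)
  define t where "t = g $ i / h $ i"
  define d where "d = g - t *s h"
  have sc: "A *v (t *s h) = t *s (A *v h)"
    unfolding scalar_mult_eq_scaleR by (rule matrix_vector_mult_scaleR)
  have Ag: "A *v g = 0" and Ah: "A *v h = 0" using g h unfolding elementary_vec_def by blast+
  have Ad: "A *v d = 0"
    by (simp add: d_def matrix_vector_mult_diff_distrib sc Ag Ah)
  have di: "d $ i = 0" using hi by (simp add: d_def t_def)
  have sd: "supp_vec d \<subseteq> supp_vec g"
  proof
    fix x assume "x \<in> supp_vec d"
    then have "d $ x \<noteq> 0" by (simp add: supp_vec_def)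
    show "x \<in> supp_vec g"
    proof (rule ccontr)
      assume "x \<notin> supp_vec g"
      then have "g $ x = 0" "h $ x = 0" using sup unfolding supp_vec_def by blast+
      then have "d $ x = 0" by (simp add: d_def)
      then show False using \<open>d $ x \<noteq> 0\<close> by simp
    qed
  qed
  have "i \<in> supp_vec g" using sup hi unfolding supp_vec_def by blast
  have "d = 0"
  proof (rule ccontr)
    assume "d \<noteq> 0"
    then have "supp_vec d = supp_vec g" using g Ad sd unfolding elementary_vec_def by blast
    then show False using di \<open>i \<in> supp_vec g\<close> unfolding supp_vec_def by blast
  qed
  then have "g = t *s h" by (simp add: d_def)
  moreover have "t \<noteq> 0" using \<open>i \<in> supp_vec g\<close> hi by (simp add: t_def supp_vec_def)
  ultimately show ?thesis by blast
qed

lemma ratio_eq: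
  fixes A :: "real^'n^'m"
  assumes g: "elementary_vec A g" and h: "elementary_vec A h"
    and sup: "supp_vec g = supp_vec h"
  shows "\<bar>g $ i\<bar> / \<bar>g $ j\<bar> = \<bar>h $ i\<bar> / \<bar>h $ j\<bar>"
proof -
  obtain t where "t \<noteq> 0" "g = t *s h" using elem_scalar[OF g h sup] by blast
  then show ?thesis by (simp add: abs_mult)
qed

lemma kappa_ge1:
  fixes A :: "real^'n^'m"
  assumes "A *v c = 0" "c \<noteq> 0"
  shows "circuit_imbalance A \<ge> 1"
proof -
  let ?P = "\<lambda>g::real^'n. A *v g = 0 \<and> g \<noteq> 0"
  obtain g where gP: "?P g" and gmin: "\<forall>h. ?P h \<longrightarrow> card (supp_vec g) \<le> card (supp_vec h)"
    using ex_has_least_nat[of ?P c "\<lambda>g. card (supp_vec g)"] assms by blast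
  have ge: "elementary_vec A g"
    unfolding elementary_vec_def
  proof (intro conjI allI impI)
    fix h assume "A *v h = 0 \<and> h \<noteq> 0 \<and> supp_vec h \<subseteq> supp_vec g"
    then show "supp_vec h = supp_vec g"
      using gmin by (metis card_seteq finite)
  qed (use gP in auto)
  have "g \<noteq> 0" using gP by simp
  then obtain i where gi: "g $ i \<noteq> 0" by (metis vec_eq_iff zero_index)
  let ?S = "{\<bar>g $ i\<bar> / \<bar>g $ j\<bar> | g i j.
      elementary_vec A g \<and> i \<in> supp_vec g \<and> j \<in> supp_vec g}"
  have one: "1 \<in> ?S"
  proof -
    have "1 = \<bar>g $ i\<bar> / \<bar>g $ i\<bar>" using gi by simp
    moreover have "i \<in> supp_vec g" using gi by (simp add: supp_vec_def)
    ultimately show ?thesis using ge by blast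
  qed
  define r where "r S = (SOME g. elementary_vec A g \<and> supp_vec g = S)" for S
  have sub: "?S \<subseteq> (\<lambda>(S, i, j). \<bar>r S $ i\<bar> / \<bar>r S $ j\<bar>) ` UNIV"
  proof
    fix x assume "x \<in> ?S"
    then obtain h i j where x: "x = \<bar>h $ i\<bar> / \<bar>h $ j\<bar>" and he: "elementary_vec A h" by blast
    have "elementary_vec A (r (supp_vec h)) \<and> supp_vec (r (supp_vec h)) = supp_vec h"
      unfolding r_def by (rule someI[of _ h]) (use he in simp)
    then have "x = \<bar>r (supp_vec h) $ i\<bar> / \<bar>r (supp_vec h) $ j\<bar>"
      using ratio_eq[OF he, of "r (supp_vec h)"] x by metis
    then show "x \<in> (\<lambda>(S, i, j). \<bar>r S $ i\<bar> / \<bar>r S $ j\<bar>) ` UNIV"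
      by (intro image_eqI[where x="(supp_vec h, i, j)"]) auto
  qed
  have "finite ?S" by (rule finite_subset[OF sub]) simp
  then have "1 \<le> Sup ?S" using one by (intro cSup_upper) (auto intro: bdd_above_finite)
  then show ?thesis unfolding circuit_imbalance_def .
qed

theorem lemma2p10:
  fixes A :: "real^'n^'m" and b :: "real^'m" and c c' s' :: "real^'n"
  assumes "\<exists>y'. dual_optimal A b c' y' s'"
    and "A *v c = 0"
    and "norm c = 1"
    and "infnorm (c - c') < 1 / (sqrt (real CARD('n)) * (real CARD('m) + 2) * circuit_imbalance A)"
  shows "\<exists>j. s' $ j > (real CARD('m) + 1) / (sqrt (real CARD('n)) * (real CARD('m) + 2))"
proof (rule ccontr)
  assume neg: "\<not> ?thesis"
  define B where "B = (real CARD('m) + 1) / (sqrt (real CARD('n)) * (real CARD('m) + 2))"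
  have sB: "\<And>j. s' $ j \<le> B" using neg unfolding B_def by (simp add: not_less)
  obtain y' where "dual_feasible A c' y' s'" using assms(1) by (auto simp: dual_optimal_def)
  then have s'eq: "s' = c' - transpose A *v y'" and s'nn: "\<And>i. s' $ i \<ge> 0"
    by (auto simp: dual_feasible_def algebra_simps)
  have c0: "c \<noteq> 0" using assms(3) by auto
  have k1: "circuit_imbalance A \<ge> 1" using kappa_ge1[OF assms(2) c0] .
  define n where "n = real CARD('n)"
  define m where "m = real CARD('m)"
  define \<kappa> where "\<kappa> = circuit_imbalance A"
  have npos: "n > 0" unfolding n_def by simp
  have m0: "m \<ge> 0" unfolding m_def by simp
  define L where "L = (\<Sum>i\<in>UNIV. \<bar>c $ i\<bar>)"
  have "c \<bullet> (transpose A *v y') = 0"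
    using assms(2) by (metis transpose_matrix_vector inner_commute dot_lmul_matrix inner_zero_right)
  then have cs: "c \<bullet> s' = 1 + c \<bullet> (c' - c)"
    using assms(3) by (simp add: s'eq inner_diff_right dot_square_norm)
  have cs_le: "c \<bullet> s' \<le> L * B"
  proof -
    have "c \<bullet> s' = (\<Sum>i\<in>UNIV. c $ i * s' $ i)" by (simp add: inner_vec_def)
    also have "\<dots> \<le> (\<Sum>i\<in>UNIV. \<bar>c $ i\<bar> * B)"
    proof (rule sum_mono)
      fix i :: 'n
      have "c $ i * s' $ i \<le> \<bar>c $ i\<bar> * s' $ i" using s'nn[of i]
        by (simp add: mult_right_mono)
      also have "\<dots> \<le> \<bar>c $ i\<bar> * B" using sB[of i] by (simp add: mult_left_mono)
      finally show "c $ i * s' $ i \<le> \<bar>c $ i\<bar> * B" .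
    qed
    finally show ?thesis by (simp add: L_def sum_distrib_right)
  qed
  have cd: "\<bar>c \<bullet> (c' - c)\<bar> \<le> L * infnorm (c - c')"
  proof -
    have "\<bar>c \<bullet> (c' - c)\<bar> = \<bar>\<Sum>i\<in>UNIV. c $ i * (c' - c) $ i\<bar>" by (simp add: inner_vec_def)
    also have "\<dots> \<le> (\<Sum>i\<in>UNIV. \<bar>c $ i * (c' - c) $ i\<bar>)" by (rule sum_abs)
    also have "\<dots> \<le> (\<Sum>i\<in>UNIV. \<bar>c $ i\<bar> * infnorm (c - c'))"
    proof (rule sum_mono)
      fix i :: 'n
      have "\<bar>(c - c') $ i\<bar> \<le> infnorm (c - c')" by (rule component_le_infnorm_cart)
      then have "\<bar>(c' - c) $ i\<bar> \<le> infnorm (c - c')" by simp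
      then show "\<bar>c $ i * (c' - c) $ i\<bar> \<le> \<bar>c $ i\<bar> * infnorm (c - c')"
        by (simp add: abs_mult mult_left_mono)
    qed
    finally show ?thesis by (simp add: L_def sum_distrib_right)
  qed
  have Lle: "L \<le> sqrt n"
  proof -
    have "L = (\<chi> i. \<bar>c $ i\<bar>) \<bullet> (\<chi> i. 1)" by (simp add: L_def inner_vec_def)
    also have "\<dots> \<le> norm (\<chi> i. \<bar>c $ i\<bar>) * norm ((\<chi> i. 1) :: real^'n)" by (rule norm_cauchy_schwarz)
    also have "norm (\<chi> i. \<bar>c $ i\<bar>) = norm c" by (simp add: norm_vec_def)
    also have "norm ((\<chi> i. 1) :: real^'n) = sqrt n" by (simp add: norm_vec_def L2_set_def n_def)
    finally show ?thesis using assms(3) by simp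
  qed
  have Lpos: "L > 0"
  proof -
    obtain i where "c $ i \<noteq> 0" using c0 by (metis vec_eq_iff zero_index)
    then have "0 < \<bar>c $ i\<bar>" by simp
    also have "\<bar>c $ i\<bar> \<le> L" unfolding L_def by (rule member_le_sum) auto
    finally show ?thesis .
  qed
  have inf_lt: "infnorm (c - c') < 1 / (sqrt n * (m + 2) * \<kappa>)"
    using assms(4) by (simp add: n_def m_def \<kappa>_def)
  have "L * infnorm (c - c') < L * (1 / (sqrt n * (m + 2) * \<kappa>))"
    by (rule mult_strict_left_mono[OF inf_lt Lpos])
  also have "\<dots> \<le> sqrt n * (1 / (sqrt n * (m + 2) * \<kappa>))"
    using Lle k1 m0 npos by (intro mult_right_mono) (auto simp: \<kappa>_def intro!: mult_nonneg_nonneg)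
  also have "\<dots> = 1 / ((m + 2) * \<kappa>)" using npos by simp
  also have "\<dots> \<le> 1 / (m + 2)"
  proof -
    have k: "\<kappa> \<ge> 1" using k1 by (simp add: \<kappa>_def)
    have "(m + 2) * 1 \<le> (m + 2) * \<kappa>" using k m0 by (intro mult_left_mono) auto
    then show ?thesis using m0 k by (intro divide_left_mono) auto
  qed
  finally have "L * infnorm (c - c') < 1 / (m + 2)" .
  then have e: "c \<bullet> (c' - c) > - (1 / (m + 2))" using cd by linarith
  have "(m + 1) / (m + 2) = 1 - 1 / (m + 2)" using m0 by (simp add: field_simps)
  then have gt: "c \<bullet> s' > (m + 1) / (m + 2)" using cs e by linarith
  have "L * B \<le> sqrt n * B"
    using Lle by (rule mult_right_mono) (use npos m0 in \<open>simp add: B_def\<close>)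
  also have "sqrt n * B = (m + 1) / (m + 2)" using npos by (simp add: B_def m_def n_def)
  finally show False using cs_le gt by linarith
qed

end
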